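(* Let $(\mathcal{E},\mathcal{L},\mathcal{B})$ be a weakly left resolving labelled space with associated inverse semigroup $S$, let $\alpha\in\mathcal{L}^\infty$ and let $\{\mathcal{F}_n\}_{n\ge0}$ be an admissible family for $\alpha$. Then \[\xi=\bigcup_{n=0}^\infty\bigcup_{A\in\mathcal{F}_n}\uparrow(\alpha_{1,n},A,\alpha_{1,n})\] is a filter in $E(S)$.
   Context: A directed graph $\mathcal{E}=(\mathcal{E}^0,\mathcal{E}^1,r,s)$ has countable nonempty vertex set, edge set, range/source maps; paths satisfy $r(\lambda_i)=s(\lambda_{i+1})$. A labelled graph has a surjective labelling $\mathcal{L}:\mathcal{E}^1\to\mathcal{A}$ extended letterwise to finite and infinite paths. $\omega$ is the empty word, $\mathcal{L}^+=\bigcup_{n\ge1}\mathcal{L}(\mathcal{E}^n)$, $\mathcal{L}^*=\{\omega\}\cup\mathcal{L}^+$, $\mathcal{L}^\infty$ the labels of infinite paths; $\alpha_{i,j}=\alpha_i\cdots\alpha_j$, $\alpha_{1,0}=\omega$. For $A\subseteq\mathcal{E}^0$, $\alpha\in\mathcal{L}^+$: $r(A,\alpha)=\{r(\lambda):\mathcal{L}(\lambda)=\alpha,\ s(\lambda)\in A\}$, $r(A,\omega)=A$, $r(\alpha)=r(\mathcal{E}^0,\alpha)$. $\mathcal{B}$ accommodating: closed under $r(\cdot,\alpha)$, finite intersections and unions, contains $r(\alpha)$ for $\alpha\in\mathcal{L}^+$; labelled space $(\mathcal{E},\mathcal{L},\mathcal{B})$ weakly left resolving if $r(A\cap B,\alpha)=r(A,\alpha)\cap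 r(B,\alpha)$ for $A,B\in\mathcal{B}$, $\alpha\in\mathcal{L}^+$. $\mathcal{B}_\alpha=\mathcal{B}\cap\mathcal{P}(r(\alpha))$. $S$ = triples $(\alpha,A,\beta)$, $\alpha,\beta\in\mathcal{L}^*$, $\emptyset\ne A\in\mathcal{B}_\alpha\cap\mathcal{B}_\beta$, plus $0$; product $(\alpha,A,\beta)(\gamma,B,\delta)=(\alpha\gamma',r(A,\gamma')\cap B,\delta)$ if $\gamma=\beta\gamma'$, $=(\alpha,A\cap r(B,\beta'),\delta\beta')$ if $\beta=\gamma\beta'$, $=0$ otherwise (empty middle entry identified with $0$). $E(S)=\{(\alpha,A,\alpha)\}\cup\{0\}$, $p\le q$ iff $pq=p$; $(\alpha,A,\alpha)\le(\beta,B,\beta)$ iff $\alpha=\beta\alpha'$ and $A\subseteq r(B,\alpha')$; $\uparrow x=\{y:x\le y\}$. A filter in a poset with least element $0$ is a nonempty upward-closed subset not containing $0$ in which any two elements have a common lower bound in it. A family $\{\mathcal{F}_n\}_{n\ge0}$ with $\mathcal{F}_n$ a filter in $\mathcal{B}_{\alpha_{1,n}}$ for $n>0$ and $\mathcal{F}_0$ a filter in $\mathcal{B}$ or empty is admissible for $\alpha$ if $\mathcal{F}_n\subseteq\{A\in\mathcal{B}_{\alpha_{1,n}}:r(A,\alpha_{n+1})\in\mathcal{F}_{n+1}\}$ for all $n\ge0$. *)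

theory Defs
  imports Main "HOL-Library.Countable_Set"
begin

text \<open>A labelled graph: vertices, edges, range, source, labelling.
  The alphabet is the image of the labelling (so the labelling is surjective onto it).\<close>
record ('v, 'e, 'a) lgraph =
  verts :: "'v set"
  edges :: "'e set"
  rg :: "'e \<Rightarrow> 'v"
  sr :: "'e \<Rightarrow> 'v"
  lab :: "'e \<Rightarrow> 'a"

definition is_graph :: "('v, 'e, 'a) lgraph \<Rightarrow> bool" where
  "is_graph G \<longleftrightarrow> verts G \<noteq> {} \<and> countable (verts G) \<and> countable (edges G)
     \<and> rg G ` edges G \<subseteq> verts G \<and> sr G ` edges G \<subseteq> verts G"

definition is_path :: "('v, 'e, 'a) lgraph \<Rightarrow> 'e list \<Rightarrow> bool" where
  "is_path G p \<longleftrightarrow> p \<noteq> [] \<and> set p \<subseteq> edges G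
     \<and> (\<forall>i. Suc i < length p \<longrightarrow> rg G (p ! i) = sr G (p ! Suc i))"

definition labels_plus :: "('v, 'e, 'a) lgraph \<Rightarrow> 'a list set" where
  "labels_plus G = {map (lab G) p | p. is_path G p}"

definition labels_star :: "('v, 'e, 'a) lgraph \<Rightarrow> 'a list set" where
  "labels_star G = insert [] (labels_plus G)"

text \<open>Labels of infinite paths (indexed from 0: alpha_1 is alpha 0).\<close>
definition labels_inf :: "('v, 'e, 'a) lgraph \<Rightarrow> (nat \<Rightarrow> 'a) set" where
  "labels_inf G = {(\<lambda>i. lab G (p i)) | p.
      \<forall>i. p i \<in> edges G \<and> rg G (p i) = sr G (p (Suc i))}"

text \<open>alpha_{1,n} = alpha_1 ... alpha_n\<close>
definition seg :: "(nat \<Rightarrow> 'a) \<Rightarrow> nat \<Rightarrow> 'a list" where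
  "seg \<alpha> n = map \<alpha> [0..<n]"

definition rng :: "('v, 'e, 'a) lgraph \<Rightarrow> 'v set \<Rightarrow> 'a list \<Rightarrow> 'v set" where
  "rng G A w = (if w = [] then A else
     {rg G (last p) | p. is_path G p \<and> map (lab G) p = w \<and> sr G (hd p) \<in> A})"

definition rlab :: "('v, 'e, 'a) lgraph \<Rightarrow> 'a list \<Rightarrow> 'v set" where
  "rlab G w = rng G (verts G) w"

definition accommodating :: "('v, 'e, 'a) lgraph \<Rightarrow> 'v set set \<Rightarrow> bool" where
  "accommodating G B \<longleftrightarrow> B \<subseteq> Pow (verts G)
     \<and> (\<forall>A\<in>B. \<forall>w\<in>labels_plus G. rng G A w \<in> B)
     \<and> (\<forall>A\<in>B. \<forall>C\<in>B. A \<inter> C \<in> B \<and> A \<union> C \<in> B)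
     \<and> (\<forall>w\<in>labels_plus G. rlab G w \<in> B)"

definition weakly_left_resolving :: "('v, 'e, 'a) lgraph \<Rightarrow> 'v set set \<Rightarrow> bool" where
  "weakly_left_resolving G B \<longleftrightarrow>
     (\<forall>A\<in>B. \<forall>C\<in>B. \<forall>w\<in>labels_plus G. rng G (A \<inter> C) w = rng G A w \<inter> rng G C w)"

definition Bsub :: "('v, 'e, 'a) lgraph \<Rightarrow> 'v set set \<Rightarrow> 'a list \<Rightarrow> 'v set set" where
  "Bsub G B w = B \<inter> Pow (rlab G w)"

text \<open>Elements of S: None is 0, Some (a, A, b) is the triple (a, A, b).\<close>
type_synonym ('v, 'a) selem = "('a list \<times> 'v set \<times> 'a list) option"

definition Sset :: "('v, 'e, 'a) lgraph \<Rightarrow> 'v set set \<Rightarrow> ('v, 'a) selem set" where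
  "Sset G B = insert None {Some (a, A, b) | a A b. a \<in> labels_star G \<and> b \<in> labels_star G
       \<and> A \<in> Bsub G B a \<and> A \<in> Bsub G B b \<and> A \<noteq> {}}"

definition mk_triple :: "'a list \<Rightarrow> 'v set \<Rightarrow> 'a list \<Rightarrow> ('v, 'a) selem" where
  "mk_triple a X d = (if X = {} then None else Some (a, X, d))"

definition smult :: "('v, 'e, 'a) lgraph \<Rightarrow> ('v, 'a) selem \<Rightarrow> ('v, 'a) selem \<Rightarrow> ('v, 'a) selem" where
  "smult G p q = (case p of None \<Rightarrow> None | Some (a, A, b) \<Rightarrow>
     (case q of None \<Rightarrow> None | Some (c, C, d) \<Rightarrow>
       (if take (length b) c = b then
          mk_triple (a @ drop (length b) c) (rng G A (drop (length b) c) \<inter> C) d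
        else if take (length c) b = c then
          mk_triple a (A \<inter> rng G C (drop (length c) b)) (d @ drop (length c) b)
        else None)))"

definition ES :: "('v, 'e, 'a) lgraph \<Rightarrow> 'v set set \<Rightarrow> ('v, 'a) selem set" where
  "ES G B = insert None {Some (a, A, a) | a A. a \<in> labels_star G \<and> A \<in> Bsub G B a \<and> A \<noteq> {}}"

definition le_S :: "('v, 'e, 'a) lgraph \<Rightarrow> ('v, 'a) selem \<Rightarrow> ('v, 'a) selem \<Rightarrow> bool" where
  "le_S G p q \<longleftrightarrow> smult G p q = p"

definition upset :: "('v, 'e, 'a) lgraph \<Rightarrow> 'v set set \<Rightarrow> ('v, 'a) selem \<Rightarrow> ('v, 'a) selem set" where
  "upset G B x = {y \<in> ES G B. le_S G x y}"

definition filter_in :: "'p set \<Rightarrow> ('p \<Rightarrow> 'p \<Rightarrow> bool) \<Rightarrow> 'p \<Rightarrow> 'p set \<Rightarrow> bool" where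
  "filter_in P le z0 F \<longleftrightarrow> F \<subseteq> P \<and> F \<noteq> {} \<and> z0 \<notin> F
     \<and> (\<forall>x\<in>F. \<forall>y\<in>P. le x y \<longrightarrow> y \<in> F)
     \<and> (\<forall>x\<in>F. \<forall>y\<in>F. \<exists>z\<in>F. le z x \<and> le z y)"

definition admissible :: "('v, 'e, 'a) lgraph \<Rightarrow> 'v set set \<Rightarrow> (nat \<Rightarrow> 'a) \<Rightarrow> (nat \<Rightarrow> 'v set set) \<Rightarrow> bool" where
  "admissible G B \<alpha> F \<longleftrightarrow>
     (\<forall>n>0. filter_in (Bsub G B (seg \<alpha> n)) (\<subseteq>) {} (F n))
     \<and> (F 0 = {} \<or> filter_in B (\<subseteq>) {} (F 0))
     \<and> (\<forall>n. F n \<subseteq> {A \<in> Bsub G B (seg \<alpha> n). rng G A [\<alpha> n] \<in> F (Suc n)})"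

end

theory Submission
  imports Defs
begin

lemma le_idem:
  assumes "A \<noteq> {}"
  shows "le_S G (Some (a, A, a)) (Some (b, C, b)) \<longleftrightarrow> (\<exists>a'. a = b @ a' \<and> A \<subseteq> rng G C a')"
proof
  assume h: "le_S G (Some (a, A, a)) (Some (b, C, b))"
  show "\<exists>a'. a = b @ a' \<and> A \<subseteq> rng G C a'"
  proof (cases "take (length a) b = a")
    case True
    with h have "mk_triple (a @ drop (length a) b) (rng G A (drop (length a) b) \<inter> C) b = Some (a, A, a)"
      by (simp add: le_S_def smult_def)
    hence e: "b = a" "rng G A (drop (length a) b) \<inter> C = A"
      by (auto simp: mk_triple_def split: if_splits)
    hence "A \<inter> C = A" by (simp add: rng_def)
    thus ?thesis using e by (intro exI[of _ "[]"]) (auto simp: rng_def)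
  next
    case False
    show ?thesis
    proof (cases "take (length b) a = b")
      case True
      with h False have "mk_triple a (A \<inter> rng G C (drop (length b) a)) (b @ drop (length b) a) = Some (a, A, a)"
        by (simp add: le_S_def smult_def)
      hence "A \<inter> rng G C (drop (length b) a) = A"
        by (auto simp: mk_triple_def split: if_splits)
      moreover have "a = b @ drop (length b) a" using True by (metis append_take_drop_id)
      ultimately show ?thesis by blast
    next
      case F2: False
      with h False show ?thesis by (simp add: le_S_def smult_def)
    qed
  qed
next
  assume "\<exists>a'. a = b @ a' \<and> A \<subseteq> rng G C a'"
  then obtain a' where a: "a = b @ a'" and s: "A \<subseteq> rng G C a'" by blast
  show "le_S G (Some (a, A, a)) (Some (b, C, b))"
  proof (cases "a' = []")
    case True
    then show ?thesis using a s assms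
      by (auto simp: le_S_def smult_def mk_triple_def rng_def Int_absorb2)
  next
    case False
    hence "take (length a) b \<noteq> a" using a
      by (metis append_eq_append_conv append_take_drop_id length_append take_all_iff le_add1 self_append_conv)
    moreover have "take (length b) a = b" "drop (length b) a = a'" using a by auto
    ultimately show ?thesis using a s assms
      by (auto simp: le_S_def smult_def mk_triple_def Int_absorb2)
  qed
qed

lemma le_None: "\<not> le_S G (Some x) None"
  by (simp add: le_S_def smult_def)

lemma ES_cases: "y \<in> ES G B \<Longrightarrow> y = None \<or> (\<exists>b C. y = Some (b, C, b) \<and> C \<noteq> {})"
  by (auto simp: ES_def)

lemma rng_mono: "A \<subseteq> C \<Longrightarrow> rng G A w \<subseteq> rng G C w"
  by (auto simp: rng_def)

lemma path_append:
  assumes "is_path G p" "is_path G q" "rg G (last p) = sr G (hd q)"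
  shows "is_path G (p @ q)"
  unfolding is_path_def
proof (intro conjI allI impI)
  show "p @ q \<noteq> []" using assms by (auto simp: is_path_def)
  show "set (p @ q) \<subseteq> edges G" using assms by (auto simp: is_path_def)
  fix i assume i: "Suc i < length (p @ q)"
  show "rg G ((p @ q) ! i) = sr G ((p @ q) ! Suc i)"
  proof (cases "Suc i < length p")
    case True thus ?thesis using assms(1) by (simp add: is_path_def nth_append)
  next
    case False
    show ?thesis
    proof (cases "Suc i = length p")
      case True
      hence "(p @ q) ! i = last p" using assms(1)
        by (simp add: is_path_def nth_append last_conv_nth flip: True)
      moreover have "(p @ q) ! Suc i = hd q" using True assms(2)
        by (simp add: is_path_def nth_append hd_conv_nth)
      ultimately show ?thesis using assms(3) by simp
    next
      case F2: False
      hence "Suc (i - length p) < length q" "i \<ge> length p" using False i by auto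
      thus ?thesis using assms(2) i
        by (simp add: is_path_def nth_append Suc_diff_le)
    qed
  qed
qed

lemma rng_append: "rng G (rng G A u) v \<subseteq> rng G A (u @ v)"
proof (cases "u = [] \<or> v = []")
  case True thus ?thesis by (auto simp: rng_def)
next
  case False
  show ?thesis
  proof
    fix x assume "x \<in> rng G (rng G A u) v"
    then obtain q where q: "is_path G q" "map (lab G) q = v" "sr G (hd q) \<in> rng G A u" "x = rg G (last q)"
      using False by (auto simp: rng_def)
    then obtain p where p: "is_path G p" "map (lab G) p = u" "sr G (hd p) \<in> A" "sr G (hd q) = rg G (last p)"
      using False by (auto simp: rng_def)
    have "is_path G (p @ q)" using path_append p q by metis
    moreover have "p \<noteq> []" "q \<noteq> []" using p q by (auto simp: is_path_def)
    ultimately show "x \<in> rng G A (u @ v)" using p q False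
      unfolding rng_def by (auto intro!: exI[of _ "p @ q"])
  qed
qed

lemma le_trans_idem:
  assumes "le_S G x y" "le_S G y z" "x = Some (a, A, a)" "A \<noteq> {}" "y \<in> ES G B" "z \<in> ES G B"
  shows "le_S G x z"
proof -
  have yN: "y \<noteq> None" using assms(1,3) by (cases y) (auto simp: le_S_def smult_def)
  then obtain b C where y: "y = Some (b, C, b)" "C \<noteq> {}" using ES_cases[OF assms(5)] by blast
  have zN: "z \<noteq> None" using assms(2) y by (cases z) (auto simp: le_S_def smult_def)
  then obtain c D where z: "z = Some (c, D, c)" "D \<noteq> {}" using ES_cases[OF assms(6)] by blast
  have "le_S G (Some (a, A, a)) (Some (b, C, b))" using assms(1,3) y by simp
  then obtain a' where a: "a = b @ a'" "A \<subseteq> rng G C a'" using le_idem[OF assms(4)] by blast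
  have "le_S G (Some (b, C, b)) (Some (c, D, c))" using assms(2) y z by simp
  then obtain b' where b: "b = c @ b'" "C \<subseteq> rng G D b'" using le_idem[OF y(2)] by blast
  have "A \<subseteq> rng G (rng G D b') a'" using a b rng_mono by blast
  also have "\<dots> \<subseteq> rng G D (b' @ a')" by (rule rng_append)
  finally have "a = c @ (b' @ a') \<and> A \<subseteq> rng G D (b' @ a')" using a b by simp
  hence "le_S G (Some (a, A, a)) (Some (c, D, c))" using le_idem[OF assms(4)] by blast
  thus ?thesis using assms(3) z by simp
qed

lemma seg_Suc: "seg \<alpha> (Suc m) = seg \<alpha> m @ [\<alpha> m]"
  by (simp add: seg_def)

lemma seg_add: "seg \<alpha> (n + k) = seg \<alpha> n @ map \<alpha> [n..<n+k]"
  using upt_add_eq_append[of 0 n k] by (simp add: seg_def)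

lemma seg_labels:
  assumes "\<alpha> \<in> labels_inf G"
  shows "seg \<alpha> n \<in> labels_star G"
proof (cases n)
  case 0 thus ?thesis by (simp add: seg_def labels_star_def)
next
  case (Suc m)
  obtain p where p: "\<alpha> = (\<lambda>i. lab G (p i))" "\<forall>i. p i \<in> edges G \<and> rg G (p i) = sr G (p (Suc i))"
    using assms by (auto simp: labels_inf_def)
  have "is_path G (map p [0..<n])" using p Suc by (auto simp: is_path_def simp del: upt_Suc)
  moreover have "seg \<alpha> n = map (lab G) (map p [0..<n])" by (simp add: seg_def p)
  ultimately show ?thesis by (auto simp: labels_star_def labels_plus_def)
qed

fun push :: "('v, 'e, 'a) lgraph \<Rightarrow> (nat \<Rightarrow> 'a) \<Rightarrow> 'v set \<Rightarrow> nat \<Rightarrow> nat \<Rightarrow> 'v set" where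
  "push G \<alpha> A n 0 = A"
| "push G \<alpha> A n (Suc k) = rng G (push G \<alpha> A n k) [\<alpha> (n + k)]"

lemma push_in:
  assumes "admissible G B \<alpha> F" "A \<in> F n"
  shows "push G \<alpha> A n k \<in> F (n + k)"
  using assms by (induction k) (auto simp: admissible_def)

lemma push_sub: "push G \<alpha> A n k \<subseteq> rng G A (map \<alpha> [n..<n+k])"
proof (induction k)
  case 0 thus ?case by (simp add: rng_def)
next
  case (Suc k)
  have "push G \<alpha> A n (Suc k) \<subseteq> rng G (rng G A (map \<alpha> [n..<n+k])) [\<alpha> (n+k)]"
    using Suc rng_mono by simp
  also have "\<dots> \<subseteq> rng G A (map \<alpha> [n..<n+k] @ [\<alpha> (n+k)])" by (rule rng_append)
  finally show ?case by simp
qed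

lemma F_filter:
  assumes "admissible G B \<alpha> F" "A \<in> F m"
  shows "filter_in (B \<inter> Pow (rlab G (seg \<alpha> m))) (\<subseteq>) {} (F m)"
proof (cases "m = 0")
  case True
  hence "filter_in B (\<subseteq>) {} (F m)" using assms by (auto simp: admissible_def)
  moreover have "F m \<subseteq> B \<inter> Pow (rlab G (seg \<alpha> m))" using assms by (auto simp: admissible_def Bsub_def)
  ultimately show ?thesis by (auto simp: filter_in_def)
next
  case False thus ?thesis using assms by (auto simp: admissible_def Bsub_def)
qed

lemma F_props:
  assumes "admissible G B \<alpha> F" "A \<in> F m"
  shows "A \<noteq> {}" "A \<in> Bsub G B (seg \<alpha> m)"
  using F_filter[OF assms] assms by (auto simp: filter_in_def Bsub_def)

theorem mainTheorem6:
  fixes G :: "('v, 'e, 'a) lgraph" and B :: "'v set set"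
    and \<alpha> :: "nat \<Rightarrow> 'a" and F :: "nat \<Rightarrow> 'v set set"
  assumes "is_graph G"
    and "accommodating G B"
    and "weakly_left_resolving G B"
    and "\<alpha> \<in> labels_inf G"
    and "admissible G B \<alpha> F"
  shows "filter_in (ES G B) (le_S G) None
           (\<Union>n. \<Union>A\<in>F n. upset G B (Some (seg \<alpha> n, A, seg \<alpha> n)))"
proof -
  let ?e = "\<lambda>n A. Some (seg \<alpha> n, A, seg \<alpha> n)"
  let ?X = "\<Union>n. \<Union>A\<in>F n. upset G B (?e n A)"
  have inES: "?e n A \<in> ES G B" if "A \<in> F n" for n A
    using F_props[OF assms(5) that] seg_labels[OF assms(4)] by (auto simp: ES_def)
  have reflS: "le_S G (?e n A) (?e n A)" if "A \<noteq> {}" for n A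
    using le_idem[OF that, of G "seg \<alpha> n" "seg \<alpha> n" A] by (simp add: rng_def)
  have selfX: "?e n A \<in> ?X" if "A \<in> F n" for n A
  proof -
    have "?e n A \<in> upset G B (?e n A)"
      using inES[OF that] reflS[OF F_props(1)[OF assms(5) that]] by (simp add: upset_def)
    thus ?thesis using that by blast
  qed
  have nonempty: "?X \<noteq> {}"
  proof -
    have "\<forall>n>0. filter_in (Bsub G B (seg \<alpha> n)) (\<subseteq>) {} (F n)" using assms(5) unfolding admissible_def by blast
    hence "filter_in (Bsub G B (seg \<alpha> 1)) (\<subseteq>) {} (F 1)" by simp
    hence "F 1 \<noteq> {}" unfolding filter_in_def by blast
    then obtain A where "A \<in> F 1" by blast
    from selfX[OF this] show ?thesis by blast
  qed
  have noNone: "None \<notin> ?X" by (auto simp: upset_def le_None)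
  have up: "\<forall>x\<in>?X. \<forall>y\<in>ES G B. le_S G x y \<longrightarrow> y \<in> ?X"
  proof (intro ballI impI)
    fix x y assume x: "x \<in> ?X" and y: "y \<in> ES G B" and xy: "le_S G x y"
    then obtain n A where A: "A \<in> F n" "x \<in> ES G B" "le_S G (?e n A) x" by (auto simp: upset_def)
    have "le_S G (?e n A) y"
      using le_trans_idem[OF A(3) xy HOL.refl F_props(1)[OF assms(5) A(1)] A(2) y] .
    hence "y \<in> upset G B (?e n A)" using y by (simp add: upset_def)
    thus "y \<in> ?X" using A(1) by blast
  qed
  have below: "\<exists>D\<in>F (max n m). le_S G (?e (max n m) D) (?e n A) \<and> le_S G (?e (max n m) D) (?e m C)"
    if A: "A \<in> F n" and C: "C \<in> F m" and nm: "n \<le> m" for n m A C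
  proof -
    obtain k where k: "m = n + k" using nm le_Suc_ex by blast
    have P: "push G \<alpha> A n k \<in> F m" using push_in[OF assms(5) A] k by simp
    have "\<forall>x\<in>F m. \<forall>y\<in>F m. \<exists>z\<in>F m. z \<subseteq> x \<and> z \<subseteq> y"
      using F_filter[OF assms(5) C] unfolding filter_in_def by (elim conjE) assumption
    then obtain D where D: "D \<in> F m" "D \<subseteq> push G \<alpha> A n k" "D \<subseteq> C"
      using P C by blast
    have Dne: "D \<noteq> {}" using F_props[OF assms(5) D(1)] by simp
    have "D \<subseteq> rng G A (map \<alpha> [n..<n+k])" by (rule order_trans[OF D(2) push_sub])
    moreover have "seg \<alpha> m = seg \<alpha> n @ map \<alpha> [n..<n+k]" using k seg_add by simp
    ultimately have l1: "le_S G (?e m D) (?e n A)" using le_idem[OF Dne, of G "seg \<alpha> m" "seg \<alpha> n" A] by blast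
    have l2: "le_S G (?e m D) (?e m C)" using le_idem[OF Dne, of G "seg \<alpha> m" "seg \<alpha> m" C] D(3)
      by (simp add: rng_def)
    show ?thesis using D(1) l1 l2 nm by (auto simp: max_def)
  qed
  have dir: "\<forall>x\<in>?X. \<forall>y\<in>?X. \<exists>z\<in>?X. le_S G z x \<and> le_S G z y"
  proof (intro ballI)
    fix x y assume x: "x \<in> ?X" and y: "y \<in> ?X"
    obtain n A where A: "A \<in> F n" "x \<in> ES G B" "le_S G (?e n A) x" using x by (auto simp: upset_def)
    obtain m C where C: "C \<in> F m" "y \<in> ES G B" "le_S G (?e m C) y" using y by (auto simp: upset_def)
    obtain D where D: "D \<in> F (max n m)" "le_S G (?e (max n m) D) (?e n A)" "le_S G (?e (max n m) D) (?e m C)"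
      using below[OF A(1) C(1)] below[OF C(1) A(1)] by (cases "n \<le> m") (auto simp: max_def)
    have Dne: "D \<noteq> {}" using F_props[OF assms(5) D(1)] by simp
    have "le_S G (?e (max n m) D) x"
      using le_trans_idem[OF D(2) A(3) _ Dne inES[OF A(1)] A(2)] by simp
    moreover have "le_S G (?e (max n m) D) y"
      using le_trans_idem[OF D(3) C(3) _ Dne inES[OF C(1)] C(2)] by simp
    ultimately show "\<exists>z\<in>?X. le_S G z x \<and> le_S G z y" using selfX[OF D(1)] by blast
  qed
  have sub: "?X \<subseteq> ES G B" by (auto simp: upset_def)
  show ?thesis unfolding filter_in_def using sub nonempty noNone up dir by blast
qed

end
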